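(* Let $X$ be a real Hilbert space, $r>0$, and let $Z_1,Z_2\subset X$ be non-empty closed $r$-prox-regular sets with $d_H(Z_1,Z_2)<\infty$, and let $0<\delta\le r/2$. Then there exists a constant $C>0$ depending only on $r$ such that for all $y_1,y_2\in X$ with $\mathrm{dist}(y_i,Z_i)\le\delta$, $i=1,2$, $$|\zeta_1-\zeta_2|^2\le C\big(|y_1-y_2|^2+d_H^2(Z_1,Z_2)+d_H(Z_1,Z_2)\big),$$ where $\zeta_i\in Z_i$ is the unique vector in $Z_i$ with $|y_i-\zeta_i|=\mathrm{dist}(y_i,Z_i)$, $i=1,2$.
   Context: $X$ is a real Hilbert space with scalar product $\langle\cdot,\cdot\rangle$ and norm $|\cdot|$; $\mathrm{dist}(x,Z)=\inf_{z\in Z}|x-z|$; $d_H(Z,\hat Z)=\max\{\sup_{z\in Z}\mathrm{dist}(z,\hat Z),\sup_{\hat z\in\hat Z}\mathrm{dist}(\hat z,Z)\}$. A closed connected $Z\subset X$ is $r$-prox-regular if for every $y\in X$ with $\mathrm{dist}(y,Z)=d\in(0,r)$ there is $x\in Z$ with $\mathrm{dist}(x+\frac rd(y-x),Z)=\frac rd|y-x|=r$; for such sets every $y$ with $\mathrm{dist}(y,Z)<r$ has a unique nearest point $x\in Z$, and it satisfies $\langle y-x,x-z\rangle+\frac{|y-x|}{2r}|x-z|^2\ge0$ for all $z\in Z$. *)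

theory Defs
  imports "HOL-Analysis.Analysis"
begin

text \<open>A real Hilbert space is modelled by a type of class real_inner and complete_space.
  dist(x,Z) is the library's infdist x Z.\<close>

definition prox_regular :: "real \<Rightarrow> 'a::real_inner set \<Rightarrow> bool" where
  "prox_regular r Z \<longleftrightarrow> closed Z \<and> connected Z \<and>
     (\<forall>y d. infdist y Z = d \<and> 0 < d \<and> d < r \<longrightarrow>
        (\<exists>x\<in>Z. infdist (x + (r / d) *\<^sub>R (y - x)) Z = (r / d) * norm (y - x)
               \<and> (r / d) * norm (y - x) = r))"

text \<open>Hausdorff distance, extended-real valued (may be infinite; sets need not be bounded).\<close>
definition hausdorff_dist :: "'a::real_normed_vector set \<Rightarrow> 'a set \<Rightarrow> ereal" where
  "hausdorff_dist Z W = max (SUP z\<in>Z. ereal (infdist z W)) (SUP w\<in>W. ereal (infdist w Z))"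

end

theory Submission
  imports Defs
begin

lemma norm_add_sq: "(norm (p+q))\<^sup>2 = (norm p)\<^sup>2 + 2 * inner p q + (norm (q::'a::real_inner))\<^sup>2"
  by (simp add: power2_norm_eq_inner inner_add inner_commute)

lemma near_pt:
  fixes Z :: "'a::real_normed_vector set"
  assumes "closed Z" "Z \<noteq> {}" "infdist p Z \<le> H"
  shows "\<exists>z\<in>Z. norm (p - z) \<le> 2*H"
proof (cases "H = 0")
  case True
  then have "infdist p Z = 0" using assms infdist_nonneg[of p Z] by linarith
  then have "p \<in> Z" using in_closure_iff_infdist_zero[OF assms(2)] assms(1) closure_closed by metis
  then show ?thesis using True by auto
next
  case False
  then have "H > 0" using assms infdist_nonneg[of p Z] by linarith
  then have "(INF a\<in>Z. dist p a) < 2*H" using assms infdist_notempty[OF assms(2)] by simp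
  then obtain z where "z \<in> Z" "dist p z < 2*H"
  proof -
    have bb: "bdd_below ((\<lambda>a. dist p a) ` Z)" by (rule bdd_belowI2[of _ 0]) simp
    show ?thesis using cINF_less_iff[OF assms(2) bb, of "2*H"] that \<open>(INF a\<in>Z. dist p a) < 2*H\<close> by blast
  qed
  then show ?thesis by (auto simp: dist_norm intro!: bexI[of _ z])
qed

lemma vi:
  fixes Z :: "'a::real_inner set"
  assumes pr: "prox_regular r Z" and r: "r>0" and zeta: "\<zeta> \<in> Z"
    and n: "norm (y - \<zeta>) = infdist y Z" and lt: "infdist y Z < r" and z: "z \<in> Z"
  shows "0 \<le> 2*r*inner (y-\<zeta>) (\<zeta>-z) + norm(y-\<zeta>) * (norm(\<zeta>-z))\<^sup>2"
proof (cases "infdist y Z = 0")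
  case True
  then have "y = \<zeta>" using n by simp
  then show ?thesis by simp
next
  case False
  define d where "d = infdist y Z"
  have dpos: "d > 0" using False infdist_nonneg[of y Z] d_def by linarith
  obtain x where x: "x \<in> Z" and x1: "infdist (x + (r / d) *\<^sub>R (y - x)) Z = (r / d) * norm (y - x)"
    and x2: "(r / d) * norm (y - x) = r"
    using pr dpos lt unfolding prox_regular_def d_def by blast
  have nx: "norm (y - x) = d" using x2 dpos r by (simp add: field_simps)
  define w where "w = x + (r / d) *\<^sub>R (y - x)"
  have key: "0 \<le> 2*r*inner (y-x) (x-z') + d*(norm(x-z'))\<^sup>2" if z': "z' \<in> Z" for z'
  proof -
    have "r \<le> norm (w - z')" using infdist_le[OF z', of w] x1 x2 w_def by (simp add: dist_norm)
    then have "r\<^sup>2 \<le> (norm (w - z'))\<^sup>2" using r by (simp add: power_mono)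
    also have "w - z' = (r / d) *\<^sub>R (y - x) + (x - z')" using w_def by (simp add: algebra_simps)
    finally have "r\<^sup>2 \<le> (norm ((r / d) *\<^sub>R (y - x)))\<^sup>2 + 2 * inner ((r / d) *\<^sub>R (y - x)) (x - z') + (norm (x - z'))\<^sup>2"
      by (simp add: norm_add_sq)
    also have "(norm ((r / d) *\<^sub>R (y - x)))\<^sup>2 = r\<^sup>2" using x2 r dpos by simp
    finally have "0 \<le> 2 * ((r/d) * inner (y - x) (x - z')) + (norm (x - z'))\<^sup>2" by simp
    then have "0 \<le> d * (2 * ((r/d) * inner (y - x) (x - z')) + (norm (x - z'))\<^sup>2)"
      using dpos by simp
    also have "\<dots> = 2*r*inner (y-x) (x-z') + d*(norm(x-z'))\<^sup>2" using dpos by (simp add: field_simps)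
    finally show ?thesis .
  qed
  have k1: "0 \<le> 2*r*inner (y-x) (x-\<zeta>) + d*(norm(x-\<zeta>))\<^sup>2" using key[OF zeta] .
  have "d\<^sup>2 = (norm ((y - x) + (x - \<zeta>)))\<^sup>2" using n d_def by simp
  also have "\<dots> = d\<^sup>2 + 2 * inner (y-x) (x-\<zeta>) + (norm (x-\<zeta>))\<^sup>2" by (subst norm_add_sq) (simp add: nx)
  finally have eq: "2 * inner (y-x) (x-\<zeta>) = - (norm (x-\<zeta>))\<^sup>2" by simp
  have "2*r*inner (y-x) (x-\<zeta>) = r*(2 * inner (y-x) (x-\<zeta>))" by simp
  also have "\<dots> = r * (- (norm (x-\<zeta>))\<^sup>2)" by (simp only: eq)
  finally have "2*r*inner (y-x) (x-\<zeta>) = r * (- (norm (x-\<zeta>))\<^sup>2)" .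
  with k1 have "0 \<le> (d - r) * (norm(x-\<zeta>))\<^sup>2" by (simp add: algebra_simps)
  moreover have "d - r < 0" using lt d_def by simp
  ultimately have "(norm(x-\<zeta>))\<^sup>2 \<le> 0" by (simp add: mult_le_0_iff zero_le_mult_iff)
  then have "x = \<zeta>" by simp
  then show ?thesis using key[OF z] nx by simp
qed

lemma scalar_ineq:
  fixes E U A B d1 d2 r h :: real
  assumes r: "r > 0" and "0 \<le> d1" "d1 \<le> r/2" "0 \<le> d2" "d2 \<le> r/2" "0 \<le> E" "0 \<le> U"
    "0 \<le> A" "A \<le> 2*h" "0 \<le> B" "B \<le> 2*h"
    and hyp: "2*r*E\<^sup>2 \<le> 2*r*U*E + 2*r*(d1*A + d2*B) + d1*(E+A)\<^sup>2 + d2*(E+B)\<^sup>2"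
  shows "E\<^sup>2 \<le> 16*U\<^sup>2 + 16*r*h + 48*h\<^sup>2"
proof -
  have s1: "(E+A)\<^sup>2 \<le> 3/2*E\<^sup>2 + 3*A\<^sup>2"
  proof -
    have "0 \<le> (E/2 - A)\<^sup>2" by simp
    then show ?thesis by (simp add: power2_eq_square algebra_simps)
  qed
  have s2: "(E+B)\<^sup>2 \<le> 3/2*E\<^sup>2 + 3*B\<^sup>2"
  proof -
    have "0 \<le> (E/2 - B)\<^sup>2" by simp
    then show ?thesis by (simp add: power2_eq_square algebra_simps)
  qed
  have A2: "A\<^sup>2 \<le> 4*h\<^sup>2" using assms power_mono[of A "2*h" 2] by (simp add: power_mult_distrib)
  have B2: "B\<^sup>2 \<le> 4*h\<^sup>2" using assms power_mono[of B "2*h" 2] by (simp add: power_mult_distrib)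
  have t1: "d1*(E+A)\<^sup>2 \<le> (r/2)*(3/2*E\<^sup>2 + 12*h\<^sup>2)"
    using mult_mono[OF \<open>d1 \<le> r/2\<close>, of "(E+A)\<^sup>2" "3/2*E\<^sup>2 + 12*h\<^sup>2"] s1 A2 r \<open>0 \<le> d1\<close> by simp
  have t2: "d2*(E+B)\<^sup>2 \<le> (r/2)*(3/2*E\<^sup>2 + 12*h\<^sup>2)"
    using mult_mono[OF \<open>d2 \<le> r/2\<close>, of "(E+B)\<^sup>2" "3/2*E\<^sup>2 + 12*h\<^sup>2"] s2 B2 r \<open>0 \<le> d2\<close> by simp
  have t3: "d1*A \<le> (r/2)*(2*h)" using mult_mono assms by (metis less_imp_le order_trans)
  have t4: "d2*B \<le> (r/2)*(2*h)" using mult_mono assms by (metis less_imp_le order_trans)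
  have "2*r*E\<^sup>2 \<le> 2*r*U*E + 2*r*(2*r*h) + r*(3/2*E\<^sup>2 + 12*h\<^sup>2)"
  proof -
    have "2*r*(d1*A + d2*B) \<le> 2*r*(2*r*h)" using t3 t4 r by simp
    then show ?thesis using hyp t1 t2 by (simp add: algebra_simps)
  qed
  then have "r * (E\<^sup>2/2) \<le> r * (2*U*E + 4*r*h + 12*h\<^sup>2)" by (simp add: algebra_simps)
  then have m: "E\<^sup>2/2 \<le> 2*U*E + 4*r*h + 12*h\<^sup>2" using r by simp
  have "0 \<le> (2*U - E/2)\<^sup>2" by simp
  then have "2*U*E \<le> 4*U\<^sup>2 + E\<^sup>2/4" by (simp add: power2_eq_square algebra_simps)
  then show ?thesis using m by simp
qed

theorem lemma4p3:
  fixes r :: real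
  assumes "r > 0"
  shows "\<exists>C>0. \<forall>(Z1::'a::{real_inner,complete_space} set) Z2 \<delta>.
           Z1 \<noteq> {} \<and> Z2 \<noteq> {} \<and> closed Z1 \<and> closed Z2 \<and>
           prox_regular r Z1 \<and> prox_regular r Z2 \<and>
           hausdorff_dist Z1 Z2 < \<infinity> \<and> 0 < \<delta> \<and> \<delta> \<le> r / 2 \<longrightarrow>
           (\<forall>y1 y2 \<zeta>1 \<zeta>2.
              infdist y1 Z1 \<le> \<delta> \<and> infdist y2 Z2 \<le> \<delta> \<and>
              \<zeta>1 \<in> Z1 \<and> norm (y1 - \<zeta>1) = infdist y1 Z1 \<and>
              \<zeta>2 \<in> Z2 \<and> norm (y2 - \<zeta>2) = infdist y2 Z2 \<longrightarrow>
              (norm (\<zeta>1 - \<zeta>2))\<^sup>2 \<le>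
                C * ((norm (y1 - y2))\<^sup>2 + (real_of_ereal (hausdorff_dist Z1 Z2))\<^sup>2
                     + real_of_ereal (hausdorff_dist Z1 Z2)))"
proof (rule exI[of _ "48 + 16*r"], intro conjI allI impI)
  show "0 < 48 + 16*r" using assms by simp
  fix Z1 Z2 :: "'a set" and \<delta> :: real and y1 y2 \<zeta>1 \<zeta>2
  assume A: "Z1 \<noteq> {} \<and> Z2 \<noteq> {} \<and> closed Z1 \<and> closed Z2 \<and>
           prox_regular r Z1 \<and> prox_regular r Z2 \<and>
           hausdorff_dist Z1 Z2 < \<infinity> \<and> 0 < \<delta> \<and> \<delta> \<le> r / 2"
  assume B: "infdist y1 Z1 \<le> \<delta> \<and> infdist y2 Z2 \<le> \<delta> \<and>
              \<zeta>1 \<in> Z1 \<and> norm (y1 - \<zeta>1) = infdist y1 Z1 \<and>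
              \<zeta>2 \<in> Z2 \<and> norm (y2 - \<zeta>2) = infdist y2 Z2"
  define HD where "HD = hausdorff_dist Z1 Z2"
  define h where "h = real_of_ereal HD"
  have i1: "ereal (infdist \<zeta>2 Z1) \<le> HD"
    unfolding HD_def hausdorff_dist_def
    by (rule order_trans[OF SUP_upper max.cobounded2]) (use B in auto)
  have i2: "ereal (infdist \<zeta>1 Z2) \<le> HD"
    unfolding HD_def hausdorff_dist_def
    by (rule order_trans[OF SUP_upper max.cobounded1]) (use B in auto)
  have "0 \<le> HD" by (rule order_trans[OF _ i1]) (simp add: infdist_nonneg)
  moreover have "HD < \<infinity>" using A HD_def by simp
  ultimately have HDe: "HD = ereal h" unfolding h_def by (cases HD) auto
  have h0: "0 \<le> h" using \<open>0 \<le> HD\<close> HDe by simp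
  have j1: "infdist \<zeta>2 Z1 \<le> h" using i1 HDe by simp
  have j2: "infdist \<zeta>1 Z2 \<le> h" using i2 HDe by simp
  obtain z1 where z1: "z1 \<in> Z1" "norm (\<zeta>2 - z1) \<le> 2*h" using near_pt[OF _ _ j1] A by blast
  obtain z2 where z2: "z2 \<in> Z2" "norm (\<zeta>1 - z2) \<le> 2*h" using near_pt[OF _ _ j2] A by blast
  have v1: "0 \<le> 2*r*inner (y1-\<zeta>1) (\<zeta>1-z1) + norm(y1-\<zeta>1) * (norm(\<zeta>1-z1))\<^sup>2"
    by (rule vi[of r Z1]) (use A B z1 assms in auto)
  have v2: "0 \<le> 2*r*inner (y2-\<zeta>2) (\<zeta>2-z2) + norm(y2-\<zeta>2) * (norm(\<zeta>2-z2))\<^sup>2"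
    by (rule vi[of r Z2]) (use A B z2 assms in auto)
  define e where "e = \<zeta>1 - \<zeta>2"
  define u where "u = y1 - y2"
  define a where "a = \<zeta>2 - z1"
  define b where "b = \<zeta>1 - z2"
  define p1 where "p1 = y1 - \<zeta>1"
  define p2 where "p2 = y2 - \<zeta>2"
  have ea: "\<zeta>1 - z1 = e + a" unfolding e_def a_def by simp
  have eb: "\<zeta>2 - z2 = b - e" unfolding e_def b_def by simp
  have pp: "p1 - p2 = u - e" unfolding p1_def p2_def u_def e_def by simp
  have idt: "inner p1 (e + a) + inner p2 (b - e) = inner u e - (norm e)\<^sup>2 + inner p1 a + inner p2 b"
  proof -
    have "inner p1 (e + a) + inner p2 (b - e) = inner (p1 - p2) e + inner p1 a + inner p2 b"
      by (simp add: inner_add_right inner_diff_right inner_diff_left)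
    also have "\<dots> = inner u e - (norm e)\<^sup>2 + inner p1 a + inner p2 b"
      by (simp add: pp inner_diff_left power2_norm_eq_inner)
    finally show ?thesis .
  qed
  have c1: "inner u e \<le> norm u * norm e" by (rule norm_cauchy_schwarz)
  have c2: "inner p1 a \<le> norm p1 * norm a" by (rule norm_cauchy_schwarz)
  have c3: "inner p2 b \<le> norm p2 * norm b" by (rule norm_cauchy_schwarz)
  have n1: "(norm (e + a))\<^sup>2 \<le> (norm e + norm a)\<^sup>2"
    by (rule power_mono[OF norm_triangle_ineq]) simp
  have n2: "(norm (b - e))\<^sup>2 \<le> (norm e + norm b)\<^sup>2"
    by (rule power_mono) (use norm_triangle_ineq4[of b e] in auto)
  have m1: "norm p1 * (norm (e + a))\<^sup>2 \<le> norm p1 * (norm e + norm a)\<^sup>2"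
    by (rule mult_left_mono[OF n1]) simp
  have m2: "norm p2 * (norm (b - e))\<^sup>2 \<le> norm p2 * (norm e + norm b)\<^sup>2"
    by (rule mult_left_mono[OF n2]) simp
  have hyp: "2*r*(norm e)\<^sup>2 \<le> 2*r*norm u*norm e + 2*r*(norm p1*norm a + norm p2*norm b)
      + norm p1*(norm e + norm a)\<^sup>2 + norm p2*(norm e + norm b)\<^sup>2"
  proof -
    have "0 \<le> 2*r*(inner p1 (e + a) + inner p2 (b - e)) + norm p1 * (norm (e + a))\<^sup>2 + norm p2 * (norm (b - e))\<^sup>2"
      using v1 v2 unfolding ea eb p1_def[symmetric] p2_def[symmetric] by (simp add: algebra_simps)
    also have "\<dots> = 2*r*(inner u e - (norm e)\<^sup>2 + inner p1 a + inner p2 b) + norm p1 * (norm (e + a))\<^sup>2 + norm p2 * (norm (b - e))\<^sup>2"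
      by (simp only: idt)
    finally have "0 \<le> 2*r*(inner u e - (norm e)\<^sup>2 + inner p1 a + inner p2 b) + norm p1 * (norm (e + a))\<^sup>2 + norm p2 * (norm (b - e))\<^sup>2" .
    moreover have "2*r*(inner u e + inner p1 a + inner p2 b) \<le> 2*r*(norm u*norm e + (norm p1*norm a + norm p2*norm b))"
      using c1 c2 c3 assms by (intro mult_left_mono) auto
    ultimately show ?thesis using m1 m2 by (simp add: algebra_simps)
  qed
  have np1: "norm p1 \<le> r/2" using A B p1_def by auto
  have np2: "norm p2 \<le> r/2" using A B p2_def by auto
  have E: "(norm e)\<^sup>2 \<le> 16*(norm u)\<^sup>2 + 16*r*h + 48*h\<^sup>2"
    by (rule scalar_ineq[OF assms _ np1 _ np2 _ _ _ _ _ _ hyp]) (use z1 z2 a_def b_def in auto)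
  have "16*(norm u)\<^sup>2 + 16*r*h + 48*h\<^sup>2 \<le> (48 + 16*r) * ((norm u)\<^sup>2 + h\<^sup>2 + h)"
  proof -
    have "16*(norm u)\<^sup>2 \<le> (48 + 16*r) * (norm u)\<^sup>2" using assms by (intro mult_right_mono) auto
    moreover have "48*h\<^sup>2 \<le> (48 + 16*r) * h\<^sup>2" using assms by (intro mult_right_mono) auto
    moreover have "16*r*h \<le> (48 + 16*r) * h" using h0 by (intro mult_right_mono) auto
    ultimately show ?thesis by (simp add: algebra_simps)
  qed
  then show "(norm (\<zeta>1 - \<zeta>2))\<^sup>2 \<le> (48 + 16*r) * ((norm (y1 - y2))\<^sup>2 + (real_of_ereal (hausdorff_dist Z1 Z2))\<^sup>2
                     + real_of_ereal (hausdorff_dist Z1 Z2))"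
    using E unfolding e_def u_def h_def HD_def by simp
qed

end
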